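(* Let $A:\mathbb{R}^n\rightrightarrows\mathbb{R}^n$ be a maximally monotone symmetric linear relation. Then $q_A^*=q_{A^{-1}}$, that is, $$q_A^*(y)=\begin{cases}\frac12\langle y,A^{-1}y\rangle,& y\in\operatorname{ran}A,\\ \infty,& y\notin\operatorname{ran}A.\end{cases}$$ Consequently, $$q_A^{**}(x)=\begin{cases}\frac12\langle x,Ax\rangle,& x\in\operatorname{ran}A^{-1},\\ \infty,& x\notin\operatorname{ran}A^{-1},\end{cases}$$ so $q_A^{**}=q_A$, and $q_A$ is lower semicontinuous and convex.
   Context: A linear relation is an operator $A:\mathbb{R}^n\rightrightarrows\mathbb{R}^n$ whose graph is a linear subspace of $\mathbb{R}^n\times\mathbb{R}^n$; monotone means $\langle x^*-y^*,x-y\rangle\ge0$ on the graph; maximally monotone means no monotone operator has strictly larger graph; symmetric means $\langle x,y^*\rangle=\langle y,x^*\rangle$ for all $(x,x^* ),(y,y^* )\in\operatorname{gra}A$. $A^{-1}$ is the set-valued inverse (graph reversed). For a monotone linear relation $B$, $q_B(x)=\frac12\langle x,Bx\rangle$ for $x\in\operatorname{dom}B$ (a single value) and $q_B(x)=\infty$ otherwise. $f^*(y)=\sup_x\{\langle y,x\rangle-f(x)\}$ is the Fenchel conjugate. *)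

theory Defs
  imports "HOL-Analysis.Analysis" "HOL-Library.Extended_Real"
begin

text \<open>A set-valued operator on a Euclidean space is represented by its graph,
  a set of pairs (x, x*). A linear relation is one whose graph is a linear subspace.\<close>

definition linear_relation :: "('a::euclidean_space \<times> 'a) set \<Rightarrow> bool" where
  "linear_relation G \<longleftrightarrow> subspace G"

definition monotone_op :: "('a::euclidean_space \<times> 'a) set \<Rightarrow> bool" where
  "monotone_op G \<longleftrightarrow> (\<forall>(x, xs)\<in>G. \<forall>(y, ys)\<in>G. (xs - ys) \<bullet> (x - y) \<ge> 0)"

definition maximal_monotone_op :: "('a::euclidean_space \<times> 'a) set \<Rightarrow> bool" where
  "maximal_monotone_op G \<longleftrightarrow> monotone_op G \<and>
     (\<forall>G'. monotone_op G' \<and> G \<subseteq> G' \<longrightarrow> G' = G)"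

definition symmetric_op :: "('a::euclidean_space \<times> 'a) set \<Rightarrow> bool" where
  "symmetric_op G \<longleftrightarrow> (\<forall>(x, xs)\<in>G. \<forall>(y, ys)\<in>G. x \<bullet> ys = y \<bullet> xs)"

text \<open>q_B(x) = 1/2 <x, Bx> for x in dom B (the value does not depend on the chosen
  element of Bx for a monotone linear relation), and +\<infinity> otherwise.\<close>
definition qform :: "('a::euclidean_space \<times> 'a) set \<Rightarrow> 'a \<Rightarrow> ereal" where
  "qform G x = (if x \<in> Domain G then ereal (1/2 * (x \<bullet> (SOME xs. (x, xs) \<in> G))) else \<infinity>)"

definition fenchel :: "('a::euclidean_space \<Rightarrow> ereal) \<Rightarrow> 'a \<Rightarrow> ereal" where
  "fenchel f y = (SUP x. ereal (y \<bullet> x) - f x)"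

definition lsc_fun :: "('a::euclidean_space \<Rightarrow> ereal) \<Rightarrow> bool" where
  "lsc_fun f \<longleftrightarrow> (\<forall>x. f x \<le> Liminf (at x) f)"

definition convex_fun :: "('a::euclidean_space \<Rightarrow> ereal) \<Rightarrow> bool" where
  "convex_fun f \<longleftrightarrow> convex {(x, t::real). f x \<le> ereal t}"

end

theory Submission
  imports Defs
begin

lemma conv_props:
  fixes G :: "('a::euclidean_space \<times> 'a) set"
  assumes "linear_relation G" and "maximal_monotone_op G" and "symmetric_op G"
  shows "linear_relation (converse G)" and "maximal_monotone_op (converse G)"
    and "symmetric_op (converse G)"
proof -
  have swl: "linear (\<lambda>(x::'a, y::'a). (y, x))"
    by (auto simp: linear_iff)
  have "converse G = (\<lambda>(x, y). (y, x)) ` G" by force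
  then show "linear_relation (converse G)"
    using assms(1) linear_subspace_image[OF swl] unfolding linear_relation_def by simp
  have mchar: "monotone_op H \<longleftrightarrow> (\<forall>a b c d. (a, b) \<in> H \<longrightarrow> (c, d) \<in> H \<longrightarrow> 0 \<le> (b - d) \<bullet> (a - c))"
    for H :: "('a \<times> 'a) set"
    unfolding monotone_op_def by fast
  have mc: "monotone_op (converse H) \<longleftrightarrow> monotone_op H" for H :: "('a \<times> 'a) set"
    unfolding mchar converse_iff by (metis inner_commute)
  show "maximal_monotone_op (converse G)"
    using assms(2) unfolding maximal_monotone_op_def
    by (metis converse_converse converse_mono mc)
  show "symmetric_op (converse G)"
  proof -
    have "symmetric_op H \<longleftrightarrow> (\<forall>a b c d. (a, b) \<in> H \<longrightarrow> (c, d) \<in> H \<longrightarrow> a \<bullet> d = c \<bullet> b)"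
      for H :: "('a \<times> 'a) set"
      unfolding symmetric_op_def by fast
    then show ?thesis using assms(3) by (metis converse_iff inner_commute)
  qed
qed

lemma wd:
  fixes G :: "('a::euclidean_space \<times> 'a) set"
  assumes "linear_relation G" "symmetric_op G" "(x, a) \<in> G" "(x, b) \<in> G"
  shows "x \<bullet> a = x \<bullet> b"
proof -
  have "(x, a) - (x, b) \<in> G" using assms subspace_diff unfolding linear_relation_def by blast
  then have "(0, a - b) \<in> G" by simp
  then have "x \<bullet> (a - b) = 0 \<bullet> a" using assms(2,3) unfolding symmetric_op_def by fastforce
  then show ?thesis by (simp add: inner_diff_right)
qed

lemma qform_eq:
  fixes G :: "('a::euclidean_space \<times> 'a) set"
  assumes "linear_relation G" "symmetric_op G" "(x, a) \<in> G"
  shows "qform G x = ereal (1/2 * (x \<bullet> a))"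
proof -
  have "(x, SOME xs. (x, xs) \<in> G) \<in> G" using assms(3) by (rule someI)
  then have "x \<bullet> (SOME xs. (x, xs) \<in> G) = x \<bullet> a" using wd assms by blast
  then show ?thesis using assms(3) unfolding qform_def by force
qed

lemma main:
  fixes G :: "('a::euclidean_space \<times> 'a) set"
  assumes lr: "linear_relation G" and mm: "maximal_monotone_op G" and sy: "symmetric_op G"
  shows "fenchel (qform G) = qform (converse G)"
proof
  fix y
  have mon: "monotone_op G" using mm unfolding maximal_monotone_op_def by simp
  have sub: "subspace G" using lr unfolding linear_relation_def by simp
  have z0: "(0, 0) \<in> G" using subspace_0[OF sub] by (simp add: zero_prod_def)
  show "fenchel (qform G) y = qform (converse G) y"
  proof (cases "y \<in> Range G")
    case True
    then obtain z where zy: "(z, y) \<in> G" by blast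
    have rhs: "qform (converse G) y = ereal (1/2 * (y \<bullet> z))"
      using qform_eq[OF conv_props(1,3)[OF assms]] zy by blast
    have "fenchel (qform G) y = ereal (1/2 * (y \<bullet> z))"
      unfolding fenchel_def
    proof (rule antisym)
      show "(SUP x. ereal (y \<bullet> x) - qform G x) \<le> ereal (1/2 * (y \<bullet> z))"
      proof (rule SUP_least)
        fix x
        show "ereal (y \<bullet> x) - qform G x \<le> ereal (1/2 * (y \<bullet> z))"
        proof (cases "x \<in> Domain G")
          case False
          then show ?thesis unfolding qform_def by simp
        next
          case True
          then obtain a where xa: "(x, a) \<in> G" by blast
          have m: "(a - y) \<bullet> (x - z) \<ge> 0" using mon xa zy unfolding monotone_op_def by fastforce
          have s: "x \<bullet> y = z \<bullet> a" using sy xa zy unfolding symmetric_op_def by fastforce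
          have "y \<bullet> x - 1/2 * (x \<bullet> a) \<le> 1/2 * (y \<bullet> z)"
            using m s by (simp add: inner_diff_left inner_diff_right inner_commute algebra_simps)
          then show ?thesis using qform_eq[OF lr sy xa] by simp
        qed
      qed
    next
      have "ereal (1/2 * (y \<bullet> z)) = ereal (y \<bullet> z) - qform G z"
        using qform_eq[OF lr sy zy] by (simp add: inner_commute)
      also have "\<dots> \<le> (SUP x. ereal (y \<bullet> x) - qform G x)" by (rule SUP_upper) simp
      finally show "ereal (1/2 * (y \<bullet> z)) \<le> (SUP x. ereal (y \<bullet> x) - qform G x)" .
    qed
    then show ?thesis using rhs by simp
  next
    case False
    have rsub: "subspace (Range G)"
    proof -
      have "Range G = snd ` G" by force
      then show ?thesis using linear_subspace_image[OF linear_snd sub] by simp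
    qed
    obtain p w where p: "p \<in> span (Range G)" and w: "\<And>v. v \<in> span (Range G) \<Longrightarrow> orthogonal w v"
      and yw: "y = p + w"
      using orthogonal_subspace_decomp_exists by blast
    have pR: "p \<in> Range G" using p span_eq_iff rsub by blast
    have wperp: "\<And>v. v \<in> Range G \<Longrightarrow> w \<bullet> v = 0"
      using w span_base unfolding orthogonal_def by blast
    have wnz: "w \<noteq> 0" using False pR yw by auto
    have yww: "y \<bullet> w = w \<bullet> w"
    proof -
      have "y \<bullet> w = p \<bullet> w + w \<bullet> w" by (simp add: yw inner_add_left)
      moreover have "p \<bullet> w = 0" using wperp[OF pR] by (simp add: inner_commute)
      ultimately show ?thesis by simp
    qed
    have wpos: "w \<bullet> w > 0" using wnz by simp
    have "monotone_op (insert (w, 0) G)"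
      unfolding monotone_op_def
    proof (intro ballI, clarify)
      fix x xs u us
      assume a: "(x, xs) \<in> insert (w, 0) G" "(u, us) \<in> insert (w, 0) G"
      have g0: "\<And>v vs. (v, vs) \<in> G \<Longrightarrow> vs \<bullet> v \<ge> 0"
        using mon z0 unfolding monotone_op_def by fastforce
      have gw: "\<And>v vs. (v, vs) \<in> G \<Longrightarrow> vs \<bullet> w = 0"
        using wperp by (force simp: inner_commute)
      show "0 \<le> (xs - us) \<bullet> (x - u)"
        using a mon g0 gw unfolding monotone_op_def
        by (auto simp: inner_diff_left inner_diff_right)
    qed
    then have "(w, 0) \<in> G" using mm unfolding maximal_monotone_op_def by blast
    then have tw: "(t *\<^sub>R w, 0) \<in> G" for t
      using subspace_scale[OF sub, of "(w,0)" t] by simp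
    have qt: "qform G (t *\<^sub>R w) = 0" for t
      using qform_eq[OF lr sy tw[of t]] by (simp add: zero_ereal_def)
    have "fenchel (qform G) y = \<infinity>"
      unfolding fenchel_def top_ereal_def[symmetric] SUP_eq_top_iff
    proof (intro allI impI)
      fix r :: ereal assume "r < top"
      then obtain s where rs: "r \<le> ereal s" by (cases r) auto
      define t where "t = (\<bar>s\<bar> + 1) / (w \<bullet> w)"
      have "ereal (y \<bullet> (t *\<^sub>R w)) - qform G (t *\<^sub>R w) = ereal (\<bar>s\<bar> + 1)"
        using qt wpos yww by (simp add: t_def)
      moreover have "r < ereal (\<bar>s\<bar> + 1)" proof -
        have "ereal s < ereal (\<bar>s\<bar> + 1)" by simp
        then show ?thesis using rs le_less_trans by blast
      qed
      ultimately show "\<exists>i\<in>UNIV. r < ereal (y \<bullet> i) - qform G i" by (metis UNIV_I)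
    qed
    moreover have "qform (converse G) y = \<infinity>" using False unfolding qform_def by simp
    ultimately show ?thesis by simp
  qed
qed

lemma lsc_fenchel:
  fixes h :: "'a::euclidean_space \<Rightarrow> ereal"
  shows "lsc_fun (fenchel h)"
  unfolding lsc_fun_def
proof
  fix x
  have "(SUP y. ereal (x \<bullet> y) - h y) \<le> Liminf (at x) (fenchel h)"
  proof (rule SUP_least)
    fix y
    let ?g = "\<lambda>x. ereal (x \<bullet> y) - h y"
    have lim: "(?g \<longlongrightarrow> ?g x) (at x)"
    proof (cases "h y")
      case (real c)
      have "((\<lambda>x. x \<bullet> y - c) \<longlongrightarrow> x \<bullet> y - c) (at x)"
        by (intro tendsto_intros)
      then have "((\<lambda>x. ereal (x \<bullet> y - c)) \<longlongrightarrow> ereal (x \<bullet> y - c)) (at x)"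
        by (rule tendsto_ereal)
      then show ?thesis using real by simp
    qed simp_all
    have "?g x = Liminf (at x) ?g"
      using lim_imp_Liminf[OF _ lim] by simp
    also have "\<dots> \<le> Liminf (at x) (fenchel h)"
    proof -
      have "\<forall>z. ?g z \<le> fenchel h z" unfolding fenchel_def by (intro allI SUP_upper2[of y]) auto
      then show ?thesis by (rule Liminf_mono[OF always_eventually])
    qed
    finally show "?g x \<le> Liminf (at x) (fenchel h)" .
  qed
  then show "fenchel h x \<le> Liminf (at x) (fenchel h)"
    unfolding fenchel_def[of h x] .
qed

lemma convex_fenchel:
  fixes h :: "'a::euclidean_space \<Rightarrow> ereal"
  shows "convex_fun (fenchel h)"
  unfolding convex_fun_def
proof (rule convexI)
  fix p q :: "'a \<times> real" and u v :: real
  assume p: "p \<in> {(x, t). fenchel h x \<le> ereal t}" and q: "q \<in> {(x, t). fenchel h x \<le> ereal t}"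
    and uv: "0 \<le> u" "0 \<le> v" "u + v = 1"
  obtain x1 t1 where p1: "p = (x1, t1)" by (cases p)
  obtain x2 t2 where q1: "q = (x2, t2)" by (cases q)
  have a: "fenchel h x1 \<le> ereal t1" "fenchel h x2 \<le> ereal t2" "0 \<le> u" "0 \<le> v" "u + v = 1"
    using p q uv p1 q1 by auto
  have "fenchel h (u *\<^sub>R x1 + v *\<^sub>R x2) \<le> ereal (u * t1 + v * t2)"
    unfolding fenchel_def
  proof (rule SUP_least)
    fix y
    have b1: "ereal (x1 \<bullet> y) - h y \<le> ereal t1"
      using a(1) unfolding fenchel_def by (meson SUP_le_iff UNIV_I)
    have b2: "ereal (x2 \<bullet> y) - h y \<le> ereal t2"
      using a(2) unfolding fenchel_def by (meson SUP_le_iff UNIV_I)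
    show "ereal ((u *\<^sub>R x1 + v *\<^sub>R x2) \<bullet> y) - h y \<le> ereal (u * t1 + v * t2)"
    proof (cases "h y")
      case (real c)
      then have c1: "x1 \<bullet> y - c \<le> t1" and c2: "x2 \<bullet> y - c \<le> t2" using b1 b2 by auto
      have "u * (x1 \<bullet> y - c) \<le> u * t1" using c1 a(3) by (rule mult_left_mono)
      moreover have "v * (x2 \<bullet> y - c) \<le> v * t2" using c2 a(4) by (rule mult_left_mono)
      moreover have "(u *\<^sub>R x1 + v *\<^sub>R x2) \<bullet> y - c = u * (x1 \<bullet> y - c) + v * (x2 \<bullet> y - c) + (u + v - 1) * c"
        by (simp add: inner_add_left algebra_simps)
      ultimately have "(u *\<^sub>R x1 + v *\<^sub>R x2) \<bullet> y - c \<le> u * t1 + v * t2"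
        using a(5) by simp
      then show ?thesis using real by simp
    next
      case PInf then show ?thesis by simp
    next
      case MInf then show ?thesis using b1 by simp
    qed
  qed
  then show "u *\<^sub>R p + v *\<^sub>R q \<in> {(x, t). fenchel h x \<le> ereal t}"
    using p1 q1 by simp
qed

theorem proposition4p25:
  fixes G :: "('a::euclidean_space \<times> 'a) set"
  assumes "linear_relation G" and "maximal_monotone_op G" and "symmetric_op G"
  shows "fenchel (qform G) = qform (converse G) \<and>
    (\<forall>y. fenchel (qform G) y =
           (if y \<in> Range G then ereal (1/2 * (y \<bullet> (SOME x. (y, x) \<in> converse G))) else \<infinity>)) \<and>
    (\<forall>x. fenchel (fenchel (qform G)) x =
           (if x \<in> Range (converse G) then ereal (1/2 * (x \<bullet> (SOME xs. (x, xs) \<in> G))) else \<infinity>)) \<and>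
    fenchel (fenchel (qform G)) = qform G \<and>
    lsc_fun (qform G) \<and>
    convex_fun (qform G)"
proof -
  have e1: "fenchel (qform G) = qform (converse G)" by (rule main[OF assms])
  have e2: "fenchel (qform (converse G)) = qform G"
    using main[OF conv_props[OF assms]] by simp
  have e3: "fenchel (fenchel (qform G)) = qform G" using e1 e2 by simp
  have l: "lsc_fun (qform G)" using lsc_fenchel[of "qform (converse G)"] e2 by simp
  have c: "convex_fun (qform G)" using convex_fenchel[of "qform (converse G)"] e2 by simp
  show ?thesis
    using e1 e3 l c by (auto simp: qform_def fun_eq_iff)
qed

end
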